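(* Let $m,k\in\mathbb{N}$ and let $\beta\in\mathbb{C}$ with $\beta\notin\mathbb{Z}_0^-$ and $\frac{\beta}{2}-m\notin\mathbb{Z}_0^-$. Then \[ {}_3F_2\left[\begin{array}{r} -2m-1,\ \beta,\ -m-k-\tfrac{1}{2};\\ -2m-2k-1,\ \tfrac{\beta}{2}-m;\end{array}1\right]_{2m+1}=0. \]
   Context: $\mathbb{N}=\{1,2,3,\dots\}$, $\mathbb{Z}_0^-=\{0,-1,-2,\dots\}$. For $a\in\mathbb{C}$ and $n\in\mathbb{N}_0$, $(a)_0=1$ and $(a)_n=a(a+1)\cdots(a+n-1)$. For $N\in\mathbb{N}_0$, ${}_3F_2\left[\begin{array}{r} a_1,a_2,a_3;\\ b_1,b_2;\end{array}z\right]_N=\sum_{n=0}^{N}\frac{(a_1)_n(a_2)_n(a_3)_n}{(b_1)_n(b_2)_n}\frac{z^n}{n!}$ (the sum of the first $N+1$ terms), defined whenever $(b_1)_n(b_2)_n\neq0$ for $0\le n\le N$. *)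

theory Defs
  imports Complex_Main
begin

definition hyp3F2_trunc ::
  "complex \<Rightarrow> complex \<Rightarrow> complex \<Rightarrow> complex \<Rightarrow> complex \<Rightarrow> complex \<Rightarrow> nat \<Rightarrow> complex" where
  "hyp3F2_trunc a1 a2 a3 b1 b2 z N =
     (\<Sum>n=0..N. pochhammer a1 n * pochhammer a2 n * pochhammer a3 n
                 / (pochhammer b1 n * pochhammer b2 n) * z ^ n / of_nat (fact n))"

end

theory Submission imports Defs "HOL-Computational_Algebra.Formal_Power_Series" begin

lemma poch_neg_nat:
  "pochhammer (- of_nat j :: complex) n / fact n = (-1)^n * of_nat (j choose n)"
proof -
  have "of_nat (j choose n) = ((-1::complex)^n * pochhammer (- of_nat j) n / fact n)"
    by (simp add: binomial_gbinomial gbinomial_pochhammer)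
  then have "(-1)^n * of_nat (j choose n) = ((-1::complex)^n * (-1)^n) * pochhammer (- of_nat j) n / fact n"
    by simp
  also have "(-1::complex)^n * (-1)^n = 1" by (simp add: power_mult_distrib[symmetric])
  finally show ?thesis by simp
qed

lemma lemA:
  fixes c :: complex
  assumes "pochhammer (2*c) j \<noteq> 0"
  shows "(\<Sum>n=0..j. (-1)^n * of_nat (j choose n) * (pochhammer c n / pochhammer (2*c) n))
         = pochhammer c j / pochhammer (2*c) j"
proof -
  have h: "\<forall>i \<in> {0..<j}. 2*c \<noteq> - of_nat i" using assms pochhammer_eq_0_iff by fastforce
  have "(\<Sum>n=0..j. (-1)^n * of_nat (j choose n) * (pochhammer c n / pochhammer (2*c) n))
     = (\<Sum>n=0..j. (pochhammer c n * pochhammer (- (of_nat j)) n) / (of_nat (fact n) * pochhammer (2*c) n))"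
  proof (rule sum.cong[OF refl])
    fix n assume "n \<in> {0..j}"
    have "pochhammer (- of_nat j :: complex) n = (-1)^n * of_nat (j choose n) * fact n"
      using poch_neg_nat[of j n] by (simp add: field_simps)
    then show "(-1)^n * of_nat (j choose n) * (pochhammer c n / pochhammer (2*c) n)
      = (pochhammer c n * pochhammer (- (of_nat j)) n) / (of_nat (fact n) * pochhammer (2*c) n)"
      by (simp add: field_simps)
  qed
  also have "\<dots> = pochhammer (2*c - c) j / pochhammer (2*c) j"
    by (rule Vandermonde_pochhammer[OF h])
  finally show ?thesis by simp
qed

lemma aux:
  fixes A B F fn fi a a' b b' :: complex
  shows "A\<noteq>0 \<Longrightarrow> B\<noteq>0 \<Longrightarrow> F\<noteq>0 \<Longrightarrow> fn\<noteq>0 \<Longrightarrow> fi\<noteq>0 \<Longrightarrow>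
   (a*a'*(b*b'))/((A*B)*F) * (F/(fn*fi)) = a*b/(A*fn) * ((b'*a')/(fi*B))"
  by (simp add: field_simps)

lemma lemB:
  fixes \<beta> g :: complex and N n :: nat
  assumes nN: "n \<le> N" and gN: "pochhammer g N \<noteq> 0"
  defines "p \<equiv> \<lambda>j. pochhammer (- of_nat N) j * pochhammer \<beta> j / (pochhammer g j * fact j)"
  shows "(\<Sum>j=0..N. p j * of_nat (j choose n))
         = p n * (pochhammer (g - \<beta>) (N - n) / pochhammer (g + of_nat n) (N - n))"
proof -
  have "(\<Sum>j=0..N. p j * of_nat (j choose n)) = (\<Sum>j=n..N. p j * of_nat (j choose n))"
    by (rule sum.mono_neutral_right) (auto simp: binomial_eq_0)
  also have "\<dots> = (\<Sum>i=0..N-n. p (i+n) * of_nat ((i+n) choose n))"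
    using sum.shift_bounds_cl_nat_ivl[of "\<lambda>j. p j * of_nat (j choose n)" 0 n "N-n"] nN by simp
  also have "\<dots> = (\<Sum>i=0..N-n. p n * ((pochhammer (\<beta> + of_nat n) i * pochhammer (- (of_nat (N-n))) i) /
      (of_nat (fact i) * pochhammer (g + of_nat n) i)))"
  proof (rule sum.cong[OF refl])
    fix i assume i: "i \<in> {0..N-n}"
    have ne: "pochhammer g (n+i) \<noteq> 0" using pochhammer_neq_0_mono[OF gN, of "n+i"] i nN by auto
    have pg: "pochhammer g (n+i) = pochhammer g n * pochhammer (g + of_nat n) i" by (rule pochhammer_product')
    have pb: "pochhammer \<beta> (n+i) = pochhammer \<beta> n * pochhammer (\<beta> + of_nat n) i" by (rule pochhammer_product')
    have pN: "pochhammer (- of_nat N :: complex) (n+i) = pochhammer (- of_nat N) n * pochhammer (- (of_nat (N-n))) i"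
      using pochhammer_product'[of "- of_nat N :: complex" n i] nN by (simp add: of_nat_diff)
    have ch: "of_nat ((n+i) choose n) = (fact (n+i) :: complex) / (fact n * fact i)"
      using binomial_fact[of n "n+i"] by simp
    have f1: "pochhammer g n \<noteq> 0" "pochhammer (g + of_nat n) i \<noteq> 0" using ne pg by auto
    show "p (i+n) * of_nat ((i+n) choose n) = p n * ((pochhammer (\<beta> + of_nat n) i * pochhammer (- (of_nat (N-n))) i) /
      (of_nat (fact i) * pochhammer (g + of_nat n) i))"
    proof -
      have "p (i+n) * of_nat ((i+n) choose n) =
        (pochhammer (- of_nat N) n * pochhammer (- (of_nat (N-n))) i * (pochhammer \<beta> n * pochhammer (\<beta> + of_nat n) i))
         / ((pochhammer g n * pochhammer (g + of_nat n) i) * fact (n+i)) * (fact (n+i) / (fact n * fact i))"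
        unfolding p_def by (simp only: add.commute[of i n] pg pb pN ch)
      also have "\<dots> = (pochhammer (- of_nat N) n * pochhammer \<beta> n / (pochhammer g n * fact n)) *
         ((pochhammer (\<beta> + of_nat n) i * pochhammer (- (of_nat (N-n))) i) / (fact i * pochhammer (g + of_nat n) i))"
        by (rule aux) (use f1 in auto)
      finally show ?thesis unfolding p_def by simp
    qed
  qed
  also have "\<dots> = p n * (\<Sum>i=0..N-n. (pochhammer (\<beta> + of_nat n) i * pochhammer (- (of_nat (N-n))) i) /
      (of_nat (fact i) * pochhammer (g + of_nat n) i))"
    by (simp add: sum_distrib_left)
  also have "(\<Sum>i=0..N-n. (pochhammer (\<beta> + of_nat n) i * pochhammer (- (of_nat (N-n))) i) /
      (of_nat (fact i) * pochhammer (g + of_nat n) i)) = pochhammer (g + of_nat n - (\<beta> + of_nat n)) (N-n) / pochhammer (g + of_nat n) (N-n)"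
  proof (rule Vandermonde_pochhammer)
    have "pochhammer g (n + (N-n)) \<noteq> 0" using gN nN by simp
    then have "pochhammer (g + of_nat n) (N-n) \<noteq> 0" by (simp add: pochhammer_product')
    then show "\<forall>i\<in>{0..<N - n}. g + of_nat n \<noteq> - of_nat i" using pochhammer_eq_0_iff by fastforce
  qed
  finally show ?thesis by simp
qed

theorem mainTheorem2:
  fixes m k :: nat and \<beta> :: complex
  assumes "m \<ge> 1" and "k \<ge> 1"
    and "\<forall>j::nat. \<beta> \<noteq> - of_nat j"
    and "\<forall>j::nat. \<beta> / 2 - of_nat m \<noteq> - of_nat j"
  shows "hyp3F2_trunc (- of_nat (2*m+1)) \<beta> (- of_nat m - of_nat k - 1/2)
           (- of_nat (2*m+2*k+1)) (\<beta> / 2 - of_nat m) 1 (2*m+1) = 0"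
proof -
  define N where "N = 2*m+1"
  define M where "M = 2*m+2*k+1"
  define c :: complex where "c = - of_nat m - of_nat k - 1/2"
  define g where "g = \<beta> / 2 - of_nat m"
  define p where "p = (\<lambda>j. pochhammer (- of_nat N) j * pochhammer \<beta> j / (pochhammer g j * fact j))"
  define l where "l = (\<lambda>n. pochhammer c n / pochhammer (- of_nat M) n)"
  have c2: "2*c = - of_nat M" unfolding c_def M_def by (simp add: field_simps)
  have gN: "pochhammer g N \<noteq> 0" using assms(4) unfolding g_def by (auto simp: pochhammer_eq_0_iff)
  have MN: "pochhammer (- of_nat M :: complex) j \<noteq> 0" if "j \<le> N" for j
  proof
    assume "pochhammer (- of_nat M :: complex) j = 0"
    then obtain ka where ka: "ka < j" "- of_nat M = - (of_nat ka :: complex)"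
      unfolding pochhammer_eq_0_iff by blast
    then have "M = ka" by simp
    then show False using ka(1) that M_def N_def by simp
  qed
  have A: "(\<Sum>n=0..N. (-1)^n * of_nat (j choose n) * l n) = l j" if j: "j \<le> N" for j
  proof -
    have "(\<Sum>n=0..N. (-1)^n * of_nat (j choose n) * l n) = (\<Sum>n=0..j. (-1)^n * of_nat (j choose n) * l n)"
      by (rule sum.mono_neutral_right) (use j in \<open>auto simp: binomial_eq_0\<close>)
    also have "\<dots> = l j" using lemA[of c j] MN[OF j] unfolding l_def c2 by simp
    finally show ?thesis .
  qed
  have B: "(\<Sum>j=0..N. p j * of_nat (j choose n)) = - ((-1)^n * p n)" if n: "n \<le> N" for n
  proof -
    have "(\<Sum>j=0..N. p j * of_nat (j choose n))
         = p n * (pochhammer (g - \<beta>) (N - n) / pochhammer (g + of_nat n) (N - n))"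
      unfolding p_def by (rule lemB[OF n gN])
    also have "pochhammer (g - \<beta>) (N - n) = (-1)^(N-n) * pochhammer (g + of_nat n) (N - n)"
    proof -
      have "pochhammer (- (\<beta>/2 + of_nat m)) (N - n) = (-1)^(N-n) * pochhammer (\<beta>/2 + of_nat m - of_nat (N-n) + 1) (N - n)"
        by (rule pochhammer_minus)
      moreover have "g - \<beta> = - (\<beta>/2 + of_nat m)" unfolding g_def by simp
      moreover have "\<beta>/2 + of_nat m - of_nat (N-n) + 1 = g + of_nat n" unfolding g_def N_def using n N_def
        by (simp add: of_nat_diff)
      ultimately show ?thesis by simp
    qed
    also have "pochhammer (g + of_nat n) (N - n) \<noteq> 0"
    proof -
      have "pochhammer g (n + (N-n)) \<noteq> 0" using gN n by simp
      then show ?thesis by (simp add: pochhammer_product')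
    qed
    then have "(-1)^(N-n) * pochhammer (g + of_nat n) (N - n) / pochhammer (g + of_nat n) (N - n) = ((-1::complex)^(N-n))"
      by simp
    also have "((-1::complex)^(N-n)) = - ((-1)^n)"
    proof -
      have "((-1::complex)^(N-n)) * (-1)^n = (-1)^N" using n by (simp add: power_add[symmetric])
      also have "\<dots> = -1" unfolding N_def by simp
      finally have "((-1::complex)^(N-n)) * (-1)^n * (-1)^n = - ((-1)^n)" by simp
      then show ?thesis by (simp add: power_mult_distrib[symmetric] mult.assoc)
    qed
    finally show ?thesis by simp
  qed
  define T where "T = (\<Sum>j=0..N. p j * l j)"
  have "T = (\<Sum>j=0..N. p j * (\<Sum>n=0..N. (-1)^n * of_nat (j choose n) * l n))"
    unfolding T_def by (rule sum.cong[OF refl]) (simp add: A)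
  also have "\<dots> = (\<Sum>j=0..N. \<Sum>n=0..N. ((-1)^n * l n) * (p j * of_nat (j choose n)))"
    by (simp add: sum_distrib_left mult_ac)
  also have "\<dots> = (\<Sum>n=0..N. \<Sum>j=0..N. ((-1)^n * l n) * (p j * of_nat (j choose n)))"
    by (rule sum.swap)
  also have "\<dots> = (\<Sum>n=0..N. ((-1)^n * l n) * (\<Sum>j=0..N. p j * of_nat (j choose n)))"
    by (simp add: sum_distrib_left)
  also have "\<dots> = (\<Sum>n=0..N. - (((-1)^n * (-1)^n) * (p n * l n)))"
    by (rule sum.cong[OF refl]) (simp add: B mult_ac)
  also have "\<dots> = - T" unfolding T_def by (simp add: sum_negf power_mult_distrib[symmetric])
  finally have T0: "T = 0" by simp
  have "hyp3F2_trunc (- of_nat (2*m+1)) \<beta> (- of_nat m - of_nat k - 1/2)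
           (- of_nat (2*m+2*k+1)) (\<beta> / 2 - of_nat m) 1 (2*m+1) = T"
    unfolding hyp3F2_trunc_def T_def N_def[symmetric] M_def[symmetric] c_def[symmetric] g_def[symmetric]
    by (rule sum.cong[OF refl]) (simp add: p_def l_def)
  then show ?thesis using T0 by simp
qed

end
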